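(* Let $\lambda>0$ and let $f$ be analytic in $\mathbb{D}=\{z:|z|<1\}$ with $f(0)=0$, $f'(0)=1$. If \[|z^2f''(z)+zf'(z)-f(z)|\le3\lambda\qquad(z\in\mathbb{D}),\] then $f\in\Omega_\lambda$. The number $3\lambda$ is best possible.
   Context: $\Omega_\lambda$ denotes the set of functions $f$ analytic in $\mathbb{D}$ with $f(0)=0$, $f'(0)=1$, such that $zf'(z)-f(z)=\lambda z^2\phi(z)$ for some analytic $\phi$ on $\mathbb{D}$ with $|\phi(z)|\le1$. *)

theory Defs
  imports "HOL-Complex_Analysis.Complex_Analysis"
begin

definition normalized_analytic :: "(complex \<Rightarrow> complex) \<Rightarrow> bool" where
  "normalized_analytic f \<longleftrightarrow>
     f holomorphic_on ball 0 1 \<and> f 0 = 0 \<and> deriv f 0 = 1"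

definition Omega :: "real \<Rightarrow> (complex \<Rightarrow> complex) set" where
  "Omega lam = {f. normalized_analytic f \<and>
     (\<exists>\<phi>. \<phi> holomorphic_on ball 0 1 \<and> (\<forall>z\<in>ball 0 1. norm (\<phi> z) \<le> 1) \<and>
        (\<forall>z\<in>ball 0 1. z * deriv f z - f z = complex_of_real lam * z\<^sup>2 * \<phi> z))}"

end

theory Submission
  imports Defs
begin

lemma schwarz_le:
  fixes f :: "complex \<Rightarrow> complex"
  assumes holf: "f holomorphic_on ball 0 1" and f0: "f 0 = 0"
    and bd: "\<And>z. z \<in> ball 0 1 \<Longrightarrow> norm (f z) \<le> 1" and xi: "norm \<xi> < 1"
  shows "norm (f \<xi>) \<le> norm \<xi>"
proof -
  have "norm (f z) < 1" if z: "norm z < 1" for z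
  proof (rule ccontr)
    assume "\<not> norm (f z) < 1"
    with bd z have eq: "norm (f z) = 1" by force
    have "f constant_on ball 0 1"
      by (rule maximum_modulus_principle[OF holf, of "ball 0 1" z])
         (use z eq bd in auto)
    then have "f z = f 0" using z by (auto simp: constant_on_def)
    with eq f0 show False by simp
  qed
  then show ?thesis using Schwarz_Lemma(1)[OF holf f0 _ xi] by (simp add: dist_norm)
qed

lemma schwarz_M:
  fixes f :: "complex \<Rightarrow> complex"
  assumes holf: "f holomorphic_on ball 0 1" and f0: "f 0 = 0" and M: "M > 0"
    and bd: "\<And>z. z \<in> ball 0 1 \<Longrightarrow> norm (f z) \<le> M" and xi: "norm \<xi> < 1"
  shows "norm (f \<xi>) \<le> M * norm \<xi>"
proof -
  have "norm ((\<lambda>z. f z / of_real M) \<xi>) \<le> norm \<xi>"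
  proof (rule schwarz_le[OF _ _ _ xi])
    show "(\<lambda>z. f z / of_real M) holomorphic_on ball 0 1"
      using holf M by (auto intro!: holomorphic_intros)
    show "f 0 / of_real M = 0" using f0 by simp
    fix z :: complex assume "z \<in> ball 0 1"
    then show "norm (f z / of_real M) \<le> 1" using bd M by (simp add: norm_divide)
  qed
  then show ?thesis using M by (simp add: norm_divide field_simps)
qed

lemma schwarz_M2:
  fixes f :: "complex \<Rightarrow> complex"
  assumes holf: "f holomorphic_on ball 0 1" and f0: "f 0 = 0" and d0: "deriv f 0 = 0" and M: "M > 0"
    and bd: "\<And>z. z \<in> ball 0 1 \<Longrightarrow> norm (f z) \<le> M" and xi: "norm \<xi> < 1"
  shows "norm (f \<xi>) \<le> M * norm \<xi> ^ 2"
proof -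
  obtain k where holk: "k holomorphic_on ball 0 1" and fk: "\<And>z. norm z < 1 \<Longrightarrow> f z = z * k z"
    and k0: "deriv f 0 = k 0"
    using Schwarz3[OF holf f0] by blast
  have kb: "norm (k z) \<le> M" if "z \<in> ball 0 1" for z
  proof (cases "z = 0")
    case True then show ?thesis using k0 d0 M by simp
  next
    case False
    have "norm (f z) \<le> M * norm z" using schwarz_M[OF holf f0 M bd] that by simp
    then have "norm z * norm (k z) \<le> M * norm z" using fk that by (simp add: norm_mult)
    then show ?thesis using False by simp
  qed
  have "norm (k \<xi>) \<le> M * norm \<xi>" by (rule schwarz_M[OF holk _ M kb xi]) (use k0 d0 in auto)
  then have "norm \<xi> * norm (k \<xi>) \<le> norm \<xi> * (M * norm \<xi>)" by (rule mult_left_mono) simp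
  then show ?thesis using fk[OF xi] by (simp add: norm_mult power2_eq_square algebra_simps)
qed

lemma factor2:
  fixes g :: "complex \<Rightarrow> complex"
  assumes holg: "g holomorphic_on ball 0 1" and g0: "g 0 = 0" and d0: "deriv g 0 = 0"
  obtains p where "p holomorphic_on ball 0 1" "\<And>z. norm z < 1 \<Longrightarrow> g z = z^2 * p z"
proof -
  obtain k where holk: "k holomorphic_on ball 0 1" and fk: "\<And>z. norm z < 1 \<Longrightarrow> g z = z * k z"
    and k0: "deriv g 0 = k 0"
    using Schwarz3[OF holg g0] by blast
  obtain p where holp: "p holomorphic_on ball 0 1" and kp: "\<And>z. norm z < 1 \<Longrightarrow> k z = z * p z"
    using Schwarz3[OF holk] k0 d0 by auto
  show ?thesis by (rule that[OF holp]) (simp add: fk kp power2_eq_square)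
qed

lemma sgn_mult_norm: "Re (cnj (sgn w) * w) = norm (w::complex)"
proof (cases "w = 0")
  case False
  have nz: "complex_of_real (norm w) \<noteq> 0" using False by simp
  have "w * cnj w = of_real (norm w)^2" by (metis complex_norm_square of_real_power)
  then have "cnj (sgn w) * w = of_real (norm w)^2 / of_real (norm w)"
    by (simp add: sgn_div_norm scaleR_conv_of_real field_simps mult.commute)
  also have "\<dots> = of_real (norm w)" using nz by (simp add: power2_eq_square)
  finally have "cnj (sgn w) * w = of_real (norm w)" .
  then show ?thesis by simp
qed simp

lemma part1:
  fixes lam :: real and f :: "complex \<Rightarrow> complex"
  assumes lam: "lam > 0" and nf: "normalized_analytic f"
    and bd: "\<forall>z\<in>ball 0 1. norm (z\<^sup>2 * deriv (deriv f) z + z * deriv f z - f z) \<le> 3 * lam"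
  shows "f \<in> Omega lam"
proof -
  define B :: "complex set" where "B = ball 0 1"
  have oB: "open B" by (simp add: B_def)
  have hol: "f holomorphic_on B" and f0: "f 0 = 0" and f'0: "deriv f 0 = 1"
    using nf by (auto simp: normalized_analytic_def B_def)
  define d1 where "d1 = deriv f"
  define d2 where "d2 = deriv d1"
  define d3 where "d3 = deriv d2"
  have hol1: "d1 holomorphic_on B" unfolding d1_def by (rule holomorphic_deriv[OF hol oB])
  have hol2: "d2 holomorphic_on B" unfolding d2_def by (rule holomorphic_deriv[OF hol1 oB])
  have D0: "(f has_field_derivative d1 z) (at z)" if "z \<in> B" for z
    unfolding d1_def using holomorphic_derivI[OF hol oB that] .
  have D1: "(d1 has_field_derivative d2 z) (at z)" if "z \<in> B" for z
    unfolding d2_def using holomorphic_derivI[OF hol1 oB that] .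
  have D2: "(d2 has_field_derivative d3 z) (at z)" if "z \<in> B" for z
    unfolding d3_def using holomorphic_derivI[OF hol2 oB that] .
  define H where "H z = z^2 * d2 z + z * d1 z - f z" for z
  define g where "g z = z * d1 z - f z" for z
  define hh where "hh z = z * g z" for z
  have 0: "(0::complex) \<in> B" by (simp add: B_def)
  have DH: "(H has_field_derivative (2*z*d2 z + z^2 * d3 z + d1 z + z * d2 z - d1 z)) (at z)"
    if "z \<in> B" for z
    unfolding H_def using D0[OF that] D1[OF that] D2[OF that]
    by (auto intro!: derivative_eq_intros simp: algebra_simps)
  have Dg: "(g has_field_derivative (z * d2 z)) (at z)" if "z \<in> B" for z
    unfolding g_def using D0[OF that] D1[OF that]
    by (auto intro!: derivative_eq_intros simp: algebra_simps)
  have Dhh: "(hh has_field_derivative H z) (at z)" if "z \<in> B" for z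
    unfolding hh_def using Dg[OF that] D0[OF that] D1[OF that]
    by (auto intro!: derivative_eq_intros simp: algebra_simps g_def H_def power2_eq_square)
  have holH: "H holomorphic_on B"
    unfolding H_def by (intro holomorphic_intros hol hol1 hol2)
  have holg: "g holomorphic_on B"
    unfolding g_def by (intro holomorphic_intros hol hol1)
  have H0: "H 0 = 0" using f0 by (simp add: H_def)
  have dH0: "deriv H 0 = 0" using DERIV_imp_deriv[OF DH[OF 0]] by simp
  have g0: "g 0 = 0" using f0 by (simp add: g_def)
  have dg0: "deriv g 0 = 0" using DERIV_imp_deriv[OF Dg[OF 0]] by simp
  have Hb: "norm (H z) \<le> 3 * lam" if "z \<in> B" for z
    using bd that by (simp add: H_def B_def d1_def d2_def)
  have Hb2: "norm (H z) \<le> 3 * lam * norm z ^ 2" if "z \<in> B" for z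
    by (rule schwarz_M2[OF holH[unfolded B_def] H0 dH0]) (use lam Hb that in \<open>auto simp: B_def\<close>)
  have hhb: "norm (hh z) \<le> lam * norm z ^ 3" if z: "z \<in> B" for z
  proof -
    define c where "c = sgn (hh z)"
    define v where "v t = Re (cnj c * hh (of_real t * z)) - lam * norm z ^ 3 * t ^ 3" for t :: real
    have seg: "of_real t * z \<in> B" if "0 \<le> t" "t \<le> 1" for t :: real
    proof -
      have "norm (of_real t * z) = t * norm z" using that by (simp add: norm_mult)
      also have "\<dots> \<le> norm z" using that by (simp add: mult_left_le_one_le)
      finally show ?thesis using z by (simp add: B_def)
    qed
    have "v 0 \<ge> v 1"
    proof (rule DERIV_nonpos_imp_nonincreasing[of 0 1])
      fix t :: real assume t: "0 \<le> t" "t \<le> 1"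
      have d: "((\<lambda>w. cnj c * hh (w * z)) has_field_derivative (cnj c * (H (of_real t * z) * z))) (at (of_real t))"
        using Dhh[OF seg[OF t]]
        by (auto intro!: derivative_eq_intros DERIV_chain2[where f = hh])
      have "((\<lambda>t. Re (cnj c * hh (of_real t * z))) has_field_derivative Re (cnj c * (H (of_real t * z) * z))) (at t)"
        using has_field_derivative_Re[OF has_vector_derivative_real_field[OF d]] by simp
      moreover have "((\<lambda>t. lam * norm z ^ 3 * t ^ 3) has_real_derivative lam * norm z ^ 3 * (3 * t^2)) (at t)"
        by (auto intro!: derivative_eq_intros)
      ultimately have dv: "(v has_field_derivative (Re (cnj c * (H (of_real t * z) * z)) - lam * norm z ^ 3 * (3 * t^2))) (at t)"
        unfolding v_def by (rule DERIV_diff)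
      have nc: "norm c \<le> 1" by (simp add: c_def norm_sgn)
      have "Re (cnj c * (H (of_real t * z) * z)) \<le> norm (cnj c * (H (of_real t * z) * z))"
        by (rule complex_Re_le_cmod)
      also have "\<dots> = norm c * norm (H (of_real t * z)) * norm z" by (simp add: norm_mult)
      also have "\<dots> \<le> 1 * (3 * lam * norm (of_real t * z) ^ 2) * norm z"
        by (intro mult_mono Hb2 seg t nc) (use lam in auto)
      also have "\<dots> = lam * norm z ^ 3 * (3 * t^2)" using t by (simp add: norm_mult power2_eq_square power3_eq_cube)
      finally show "\<exists>y. (v has_real_derivative y) (at t) \<and> y \<le> 0" using dv by auto
    qed simp
    moreover have "v 0 = 0" by (simp add: v_def hh_def g0)
    moreover have "v 1 = norm (hh z) - lam * norm z ^ 3" using sgn_mult_norm[of "hh z"] by (simp only: v_def c_def of_real_1 mult_1 power_one mult_1_right)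
    ultimately show ?thesis by simp
  qed
  have gb: "norm (g z) \<le> lam * norm z ^ 2" if "z \<in> B" for z
  proof (cases "z = 0")
    case True then show ?thesis using g0 by simp
  next
    case False
    have "norm z * norm (g z) \<le> norm z * (lam * norm z ^ 2)"
      using hhb[OF that] by (simp add: hh_def norm_mult power3_eq_cube power2_eq_square algebra_simps)
    then show ?thesis using False by simp
  qed
  obtain p where holp: "p holomorphic_on ball 0 1" and gp: "\<And>z. norm z < 1 \<Longrightarrow> g z = z^2 * p z"
    using factor2[OF holg[unfolded B_def] g0 dg0] by blast
  have pb': "norm (p z) \<le> lam" if "z \<in> B" "z \<noteq> 0" for z
  proof -
    have "norm z ^ 2 * norm (p z) \<le> norm z ^ 2 * lam"
      using gb[OF that(1)] gp[of z] that by (simp add: B_def norm_mult norm_power mult.commute)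
    then show ?thesis using that(2) by simp
  qed
  have pb: "norm (p z) \<le> lam" if "z \<in> B" for z
  proof (cases "z = 0")
    case False then show ?thesis using pb' that by blast
  next
    case True
    have "continuous (at 0) p"
      using holp by (metis centre_in_ball holomorphic_on_imp_continuous_on continuous_on_interior interior_ball zero_less_one)
    then have "(p \<longlongrightarrow> p 0) (at 0)" by (simp add: isCont_def)
    moreover have "eventually (\<lambda>w. norm (p w) \<le> lam) (at 0)"
    proof -
      have "eventually (\<lambda>w. w \<in> B) (at (0::complex))"
        using oB 0 by (rule eventually_at_in_open')
      moreover have "eventually (\<lambda>w. w \<noteq> 0) (at (0::complex))" by (simp add: eventually_at_filter)
      ultimately show ?thesis by eventually_elim (use pb' in auto)
    qed
    ultimately have "norm (p 0) \<le> lam" by (intro Lim_norm_ubound) auto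
    then show ?thesis using True by simp
  qed
  define \<phi> where "\<phi> z = p z / of_real lam" for z
  show ?thesis unfolding Omega_def
  proof (intro CollectI conjI exI[of _ \<phi>] ballI)
    show "normalized_analytic f" by (rule nf)
    show "\<phi> holomorphic_on ball 0 1" unfolding \<phi>_def using holp lam by (auto intro!: holomorphic_intros)
    fix z :: complex assume z: "z \<in> ball 0 1"
    show "norm (\<phi> z) \<le> 1" using pb[of z] z lam by (simp add: \<phi>_def B_def norm_divide)
    show "z * deriv f z - f z = complex_of_real lam * z\<^sup>2 * \<phi> z"
      using gp[of z] z lam by (simp add: g_def d1_def \<phi>_def)
  qed
qed

lemma part2:
  fixes lam c :: real
  assumes lam: "lam > 0" and c: "c > 3 * lam"
  shows "\<exists>f. normalized_analytic f \<and>
            (\<forall>z\<in>ball 0 1. norm (z\<^sup>2 * deriv (deriv f) z + z * deriv f z - f z) \<le> c) \<and>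
            f \<notin> Omega lam"
proof -
  define a :: complex where "a = of_real (c / 3)"
  define f where "f z = z + a * z^2" for z
  have d1: "deriv f = (\<lambda>z. 1 + 2 * a * z)"
  proof
    fix z
    show "deriv f z = 1 + 2 * a * z"
      unfolding f_def[abs_def] by (rule DERIV_imp_deriv) (auto intro!: derivative_eq_intros)
  qed
  have d2: "deriv (deriv f) = (\<lambda>z. 2 * a)"
  proof
    fix z
    show "deriv (deriv f) z = 2 * a" unfolding d1
      by (rule DERIV_imp_deriv) (auto intro!: derivative_eq_intros)
  qed
  have nf: "normalized_analytic f"
  proof -
    have "f holomorphic_on ball 0 1" unfolding f_def[abs_def] by (auto intro!: holomorphic_intros)
    then show ?thesis unfolding normalized_analytic_def by (simp add: d1 f_def)
  qed
  have bd: "norm (z\<^sup>2 * deriv (deriv f) z + z * deriv f z - f z) \<le> c" if "z \<in> ball 0 1" for z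
  proof -
    have "z\<^sup>2 * deriv (deriv f) z + z * deriv f z - f z = of_real c * z^2"
      unfolding d2 unfolding d1 by (simp add: f_def a_def algebra_simps power2_eq_square)
    also have "norm \<dots> = c * norm z ^ 2" using c lam by (simp add: norm_mult norm_power)
    also have "\<dots> \<le> c * 1"
      using that c lam by (intro mult_left_mono) (auto simp: power_le_one)
    finally show ?thesis by simp
  qed
  have nO: "f \<notin> Omega lam"
  proof
    assume "f \<in> Omega lam"
    then obtain \<phi> where nb: "\<forall>z\<in>ball 0 1. norm (\<phi> z) \<le> 1"
      and eq: "\<forall>z\<in>ball 0 1. z * deriv f z - f z = complex_of_real lam * z\<^sup>2 * \<phi> z"
      unfolding Omega_def by blast
    define z :: complex where "z = 1/2"
    have zb: "z \<in> ball 0 1" by (simp add: z_def)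
    have e1: "z * deriv f z - f z = a * z^2" by (simp add: d1 f_def algebra_simps power2_eq_square)
    have "a * z^2 = complex_of_real lam * z^2 * \<phi> z" using eq zb e1 by metis
    then have "a = complex_of_real lam * \<phi> z" by (simp add: z_def)
    then have "norm a = norm (complex_of_real lam * \<phi> z)" by simp
    moreover have "norm a = c / 3" using c lam by (simp add: a_def)
    ultimately have "c / 3 = lam * norm (\<phi> z)" using lam by (simp add: norm_mult)
    also have "\<dots> \<le> lam" using nb zb lam by (simp add: mult_left_le)
    finally show False using c by simp
  qed
  show ?thesis using nf bd nO by blast
qed

theorem theorem4p4:
  fixes lam :: real
  assumes "lam > 0"
  shows "(\<forall>f. normalized_analytic f \<longrightarrow>
            (\<forall>z\<in>ball 0 1. norm (z\<^sup>2 * deriv (deriv f) z + z * deriv f z - f z) \<le> 3 * lam)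
            \<longrightarrow> f \<in> Omega lam)
       \<and> (\<forall>c > 3 * lam. \<exists>f. normalized_analytic f \<and>
            (\<forall>z\<in>ball 0 1. norm (z\<^sup>2 * deriv (deriv f) z + z * deriv f z - f z) \<le> c) \<and>
            f \<notin> Omega lam)"
  using part1[OF assms] part2[OF assms] by blast

end
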